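(* If $G$ is a connected graph with $|V(G)| = n > 1$, then some value occurs at least $\left\lceil 2n/\tau(G) \right\rceil$ times in the detour sequence of $G$ (that is, the detour sequence of $G$ has a repetition of length at least $\lceil 2n/\tau(G)\rceil$).
   Context: All graphs are finite and simple. The order of a path is its number of vertices. For a vertex $v$ of $G$, $\tau(v)$ is the order of a longest path in $G$ having $v$ as an endvertex, and $\tau(G)=\max_v \tau(v)$ is the order of a longest path in $G$. The detour sequence of $G$ is the nondecreasing sequence of the values $\tau(v)$, $v\in V(G)$ (one term per vertex). A repetition in a nondecreasing sequence is a maximal block of at least two consecutive equal terms; its length is the number of terms in the block. *)

theory Defs
  imports Complex_Main
begin

definition simple_graph :: "'a set \<Rightarrow> ('a \<Rightarrow> 'a \<Rightarrow> bool) \<Rightarrow> bool" where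
  "simple_graph V E \<longleftrightarrow> finite V \<and> (\<forall>x y. E x y \<longrightarrow> x \<in> V \<and> y \<in> V)
     \<and> (\<forall>x y. E x y \<longrightarrow> E y x) \<and> (\<forall>x. \<not> E x x)"

text \<open>A path is a nonempty list of distinct vertices, consecutive ones adjacent.
  Its order is its length (number of vertices).\<close>
definition is_path :: "'a set \<Rightarrow> ('a \<Rightarrow> 'a \<Rightarrow> bool) \<Rightarrow> 'a list \<Rightarrow> bool" where
  "is_path V E p \<longleftrightarrow> p \<noteq> [] \<and> distinct p \<and> set p \<subseteq> V
     \<and> (\<forall>i. Suc i < length p \<longrightarrow> E (p ! i) (p ! Suc i))"

definition connected_graph :: "'a set \<Rightarrow> ('a \<Rightarrow> 'a \<Rightarrow> bool) \<Rightarrow> bool" where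
  "connected_graph V E \<longleftrightarrow>
     (\<forall>u\<in>V. \<forall>w\<in>V. \<exists>p. is_path V E p \<and> hd p = u \<and> last p = w)"

definition tau :: "'a set \<Rightarrow> ('a \<Rightarrow> 'a \<Rightarrow> bool) \<Rightarrow> 'a \<Rightarrow> nat" where
  "tau V E v = Max {length p | p. is_path V E p \<and> (hd p = v \<or> last p = v)}"

definition tauG :: "'a set \<Rightarrow> ('a \<Rightarrow> 'a \<Rightarrow> bool) \<Rightarrow> nat" where
  "tauG V E = Max {length p | p. is_path V E p}"

end

theory Submission imports Defs begin

lemma path_iff: "is_path V E p \<longleftrightarrow> p \<noteq> [] \<and> distinct p \<and> set p \<subseteq> V \<and> successively E p"
  by (simp add: is_path_def successively_conv_nth)

lemma path_appendD:
  assumes "is_path V E (xs @ ys)" "xs \<noteq> []" "ys \<noteq> []"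
  shows "is_path V E xs" "is_path V E ys" "E (last xs) (hd ys)" "set xs \<inter> set ys = {}"
  using assms by (auto simp: path_iff successively_append_iff)

lemma path_appendI:
  assumes "is_path V E xs" "is_path V E ys" "E (last xs) (hd ys)" "set xs \<inter> set ys = {}"
  shows "is_path V E (xs @ ys)"
  using assms by (auto simp: path_iff successively_append_iff)

lemma path_take: "is_path V E p \<Longrightarrow> 0 < k \<Longrightarrow> is_path V E (take k p)"
  by (cases "k < length p") (use path_appendD(1)[of V E "take k p" "drop k p"] in \<open>auto simp: path_iff\<close>)

lemma path_drop: "is_path V E p \<Longrightarrow> k < length p \<Longrightarrow> is_path V E (drop k p)"
proof (cases "k = 0")
  case False
  assume "is_path V E p" "k < length p"
  then have "is_path V E (take k p @ drop k p)" by simp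
  moreover have "take k p \<noteq> []" using False \<open>k < length p\<close> by auto
  moreover have "drop k p \<noteq> []" using \<open>k < length p\<close> by simp
  ultimately show ?thesis by (rule path_appendD(2))
qed simp

lemma path_rev: "is_path V E p \<Longrightarrow> (\<And>x y. E x y \<Longrightarrow> E y x) \<Longrightarrow> is_path V E (rev p)"
proof -
  assume "is_path V E p" and s: "\<And>x y. E x y \<Longrightarrow> E y x"
  have "successively E p" using \<open>is_path V E p\<close> by (simp add: path_iff)
  then have "successively (\<lambda>x y. E y x) p" by (rule successively_mono) (use s in blast)
  then show ?thesis using \<open>is_path V E p\<close> by (simp add: path_iff)
qed

lemma lengths_finite: "finite V \<Longrightarrow> finite {length p | p. is_path V E p \<and> Q p}"
proof -
  assume "finite V"
  have "{p. is_path V E p \<and> Q p} \<subseteq> {xs. set xs \<subseteq> V \<and> distinct xs}" by (auto simp: path_iff)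
  then have "finite {p. is_path V E p \<and> Q p}" using finite_subset_distinct[OF \<open>finite V\<close>] finite_subset by blast
  moreover have "{length p | p. is_path V E p \<and> Q p} = length ` {p. is_path V E p \<and> Q p}" by blast
  ultimately show ?thesis by simp
qed

lemma lengths_finite': "finite V \<Longrightarrow> finite {length p | p. is_path V E p}"
  using lengths_finite[of V E "\<lambda>_. True"] by simp

lemma tau_ge: "finite V \<Longrightarrow> is_path V E p \<Longrightarrow> hd p = v \<or> last p = v \<Longrightarrow> length p \<le> tau V E v"
  unfolding tau_def by (rule Max_ge) (use lengths_finite in auto)

lemma tauG_ge: "finite V \<Longrightarrow> is_path V E p \<Longrightarrow> length p \<le> tauG V E"
  unfolding tauG_def by (rule Max_ge) (use lengths_finite' in auto)

lemma single_path: "v \<in> V \<Longrightarrow> is_path V E [v]"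
  by (simp add: path_iff)

lemma lengths_ne: "v \<in> V \<Longrightarrow> Q [v] \<Longrightarrow> {length p | p. is_path V E p \<and> Q p} \<noteq> {}"
proof -
  assume "v \<in> V" "Q [v]"
  then have "is_path V E [v] \<and> Q [v]" by (simp add: single_path)
  then have "length [v] \<in> {length p | p. is_path V E p \<and> Q p}" by blast
  then show ?thesis by blast
qed

lemma lengths_ne': "V \<noteq> {} \<Longrightarrow> {length p | p. is_path V E p} \<noteq> {}"
proof -
  assume "V \<noteq> {}"
  then obtain v where "v \<in> V" by blast
  then show ?thesis using lengths_ne[of v V "\<lambda>_. True" E] by simp
qed

lemma tau_le: "finite V \<Longrightarrow> v \<in> V \<Longrightarrow> tau V E v \<le> tauG V E"
  unfolding tau_def tauG_def
proof (rule Max_mono)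
  assume "finite V" "v \<in> V"
  show "{length p |p. is_path V E p \<and> (hd p = v \<or> last p = v)} \<subseteq> {length p |p. is_path V E p}"
    by blast
  show "{length p |p. is_path V E p \<and> (hd p = v \<or> last p = v)} \<noteq> {}"
    by (rule lengths_ne[OF \<open>v \<in> V\<close>]) simp
  show "finite {length p |p. is_path V E p}" by (rule lengths_finite'[OF \<open>finite V\<close>])
qed

lemma tauG_le: "finite V \<Longrightarrow> V \<noteq> {} \<Longrightarrow> tauG V E \<le> card V"
  unfolding tauG_def
proof (rule Max.boundedI)
  assume "finite V" "V \<noteq> {}"
  show "finite {length p | p. is_path V E p}" using lengths_finite' \<open>finite V\<close> .
  show "{length p | p. is_path V E p} \<noteq> {}" using lengths_ne' \<open>V \<noteq> {}\<close> .
  fix a assume "a \<in> {length p | p. is_path V E p}"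
  then obtain p where p: "is_path V E p" "a = length p" by blast
  then have "distinct p" "set p \<subseteq> V" by (simp_all add: path_iff)
  then have "card (set p) \<le> card V" "card (set p) = length p"
    using card_mono[OF \<open>finite V\<close>] distinct_card by auto
  then show "a \<le> card V" using p by simp
qed

lemma longest: "finite V \<Longrightarrow> V \<noteq> {} \<Longrightarrow> \<exists>P. is_path V E P \<and> length P = tauG V E"
proof -
  assume "finite V" "V \<noteq> {}"
  have "tauG V E \<in> {length p | p. is_path V E p}"
    unfolding tauG_def by (rule Max_in[OF lengths_finite'[OF \<open>finite V\<close>] lengths_ne'[OF \<open>V \<noteq> {}\<close>]])
  then show ?thesis by auto
qed

lemma ar1: "2 * (n - 1) \<le> L * d - d \<Longrightarrow> d * L < 2 * (n::nat) \<Longrightarrow> 1 < n \<Longrightarrow> d \<le> 1"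
proof -
  assume h: "2 * (n - 1) \<le> L * d - d" and dL: "d * L < 2 * (n::nat)" "1 < n"
  define x where "x = d * L"
  have "L * d = x" unfolding x_def by simp
  then show "d \<le> 1" using h dL unfolding x_def[symmetric] by arith
qed
lemma ar2: "i \<noteq> L div 2 \<Longrightarrow> Suc i \<le> t \<Longrightarrow> L - i \<le> t \<Longrightarrow> i < (L::nat) \<Longrightarrow> L + 2 \<le> 2 * t"
  by presburger
lemma ar3: "i = L div 2 \<Longrightarrow> Suc i \<le> t \<Longrightarrow> even (L::nat) \<Longrightarrow> L + 2 \<le> 2 * t"
  by presburger

lemma key:
  assumes sg: "simple_graph V E" and cg: "connected_graph V E"
    and P: "is_path V E P" "length P = tauG V E" and v: "v \<in> V"
  shows "(odd (tauG V E) \<and> v = P ! (tauG V E div 2)) \<or> tauG V E + 2 \<le> 2 * tau V E v"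
proof -
  define L where "L = tauG V E"
  have fin: "finite V" and sym: "\<And>x y. E x y \<Longrightarrow> E y x" using sg by (auto simp: simple_graph_def)
  have PL: "length P = L" using P L_def by simp
  have Pne: "P \<noteq> []" using P by (simp add: path_iff)
  show ?thesis
  proof (cases "v \<in> set P")
    case True
    then obtain i where i: "i < L" "v = P ! i" using PL by (metis in_set_conv_nth)
    have "is_path V E (take (Suc i) P)" using path_take P by blast
    moreover have "last (take (Suc i) P) = v" using i PL by (simp add: take_Suc_conv_app_nth)
    ultimately have t1: "Suc i \<le> tau V E v" using tau_ge[OF fin] i PL by fastforce
    have "is_path V E (drop i P)" using path_drop P i PL by blast
    moreover have "hd (drop i P) = v" using i PL by (simp add: hd_drop_conv_nth)
    ultimately have t2: "L - i \<le> tau V E v" using tau_ge[OF fin] i PL by fastforce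
    show ?thesis
    proof (cases "i = L div 2")
      case True
      show ?thesis
      proof (cases "odd L")
        case True
        then show ?thesis using \<open>i = L div 2\<close> i unfolding L_def[symmetric] by simp
      next
        case False
        then have "L + 2 \<le> 2 * tau V E v" using ar3[OF \<open>i = L div 2\<close> t1] by simp
        then show ?thesis unfolding L_def[symmetric] by simp
      qed
    next
      case False
      then have "L + 2 \<le> 2 * tau V E v" using ar2[OF _ t1 t2 i(1)] by blast
      then show ?thesis unfolding L_def[symmetric] by simp
    qed
  next
    case False
    have "P ! 0 \<in> V" using P Pne unfolding path_iff by (meson nth_mem length_greater_0_conv subsetD)
    then obtain q where q: "is_path V E q" "hd q = v" "last q = P ! 0"
      using cg v unfolding connected_graph_def by blast
    define a where "a = takeWhile (\<lambda>x. x \<notin> set P) q"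
    define r where "r = dropWhile (\<lambda>x. x \<notin> set P) q"
    have qar: "q = a @ r" unfolding a_def r_def by simp
    have qne: "q \<noteq> []" using q by (simp add: path_iff)
    have "last q \<in> set P" using q Pne by (simp add: hd_conv_nth[symmetric])
    then have rne: "r \<noteq> []"
    proof (intro notI)
      assume "last q \<in> set P" "r = []"
      then have "\<forall>x\<in>set q. x \<notin> set P" unfolding r_def by (simp add: dropWhile_eq_Nil_conv)
      then show False using \<open>last q \<in> set P\<close> last_in_set[OF qne] by blast
    qed
    have ane: "a \<noteq> []" using qne q(2) False by (cases q) (auto simp: a_def)
    have hr: "hd r \<in> set P" using hd_dropWhile[OF rne[unfolded r_def]] unfolding r_def by simp
    have ap: "is_path V E a" and ear: "E (last a) (hd r)"
      using path_appendD[of V E a r] q qar ane rne by auto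
    have disj: "set a \<inter> set P = {}" unfolding a_def by (auto dest: set_takeWhileD)
    have ha: "hd a = v" using q qar ane by simp
    obtain i where i: "i < L" "hd r = P ! i" using hr PL by (metis in_set_conv_nth)
    have alen: "1 \<le> length a" using ane by (cases a) auto
    have dp: "is_path V E (drop i P)" using path_drop P i PL by blast
    have "is_path V E (a @ drop i P)"
      using path_appendI[OF ap dp] ear i disj PL
      by (auto simp: hd_drop_conv_nth dest: in_set_dropD)
    moreover have "hd (a @ drop i P) = v" using ha ane by simp
    ultimately have t1: "length a + (L - i) \<le> tau V E v" using tau_ge[OF fin] PL by fastforce
    have tp: "is_path V E (take (Suc i) P)" using path_take P by blast
    have ra: "is_path V E (rev a)" using path_rev[OF ap] sym by blast
    have lt: "last (take (Suc i) P) = P ! i" using i PL by (simp add: take_Suc_conv_app_nth)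
    have hra: "hd (rev a) = last a" using ane by (simp add: hd_rev)
    have e2: "E (last (take (Suc i) P)) (hd (rev a))" unfolding lt hra using sym ear i(2) by simp
    have "set (take (Suc i) P) \<subseteq> set P" by (rule set_take_subset)
    then have d2: "set (take (Suc i) P) \<inter> set (rev a) = {}" using disj by auto
    have "is_path V E (take (Suc i) P @ rev a)"
      by (rule path_appendI[OF tp ra e2 d2])
    moreover have "last (take (Suc i) P @ rev a) = v" using ha ane by (simp add: last_rev)
    ultimately have t2: "Suc i + length a \<le> tau V E v" using tau_ge[OF fin] PL i by fastforce
    show ?thesis using t1 t2 alen i unfolding L_def[symmetric] by linarith
  qed
qed


lemma pigeon:
  assumes "finite A" "finite K" "\<forall>v\<in>A. f v \<in> K" "\<forall>k. card {v\<in>A. f v = k} \<le> d"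
  shows "card A \<le> card K * d"
proof -
  have "A = (\<Union>k\<in>K. {v\<in>A. f v = k})" using assms(3) by blast
  then have "card A = (\<Sum>k\<in>K. card {v\<in>A. f v = k})"
    using card_UN_disjoint[of K "\<lambda>k. {v\<in>A. f v = k}"] assms(1,2) by auto
  also have "\<dots> \<le> (\<Sum>k\<in>K. d)" by (rule sum_mono) (use assms(4) in blast)
  finally show ?thesis by simp
qed

theorem theorem1p7:
  fixes V :: "'a set" and E :: "'a \<Rightarrow> 'a \<Rightarrow> bool" and n :: nat
  assumes "simple_graph V E" and "connected_graph V E"
    and "card V = n" and "n > 1"
  shows "\<exists>k. of_nat (card {v \<in> V. tau V E v = k})
              \<ge> \<lceil>2 * real n / real (tauG V E)\<rceil>"
proof (rule ccontr)
  assume neg: "\<not> ?thesis"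
  have fin: "finite V" using assms(1) by (simp add: simple_graph_def)
  have Vne: "V \<noteq> {}" using assms(3,4) by auto
  define L where "L = tauG V E"
  obtain P where P: "is_path V E P" "length P = L" using longest[OF fin Vne] L_def by blast
  have Ln: "L \<le> n" using tauG_le[OF fin Vne] assms(3) L_def by simp
  have L1: "1 \<le> L" using P by (cases P) (auto simp: path_iff)
  define m where "m = P ! (L div 2)"
  have mV: "m \<in> V" using P L1 unfolding m_def by (auto simp: path_iff)
  define K where "K = {k. L + 2 \<le> 2*k \<and> k \<le> L}"
  have K: "K = {(L+3) div 2..L}" unfolding K_def by (auto; presburger)
  have finK: "finite K" using K by simp
  have cK1: "2 * card K \<le> L" unfolding K by simp
  have cK2: "odd L \<Longrightarrow> 2 * card K + 1 \<le> L" unfolding K by simp presburger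
  note cK = cK1 cK2
  define A where "A = (if odd L then V - {m} else V)"
  have finA: "finite A" using fin A_def by simp
  have PL': "length P = tauG V E" using P(2) L_def by simp
  have AK: "\<forall>v\<in>A. tau V E v \<in> K"
  proof
    fix v assume vA: "v \<in> A"
    then have vV: "v \<in> V" by (simp add: A_def split: if_splits)
    have nm: "odd L \<Longrightarrow> v \<noteq> m" using vA by (simp add: A_def)
    have kv: "(odd L \<and> v = m) \<or> L + 2 \<le> 2 * tau V E v"
      using key[OF assms(1,2) P(1) PL' vV] unfolding L_def[symmetric] m_def[symmetric] .
    have "tau V E v \<le> L" using tau_le[OF fin vV, of E] unfolding L_def .
    then show "tau V E v \<in> K" using kv nm unfolding K_def by blast
  qed
  have cA1: "odd L \<Longrightarrow> card A + 1 = n"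
    using assms(3,4) mV fin by (simp add: A_def card_Diff_singleton)
  have cA2: "even L \<Longrightarrow> card A = n" using assms(3) by (simp add: A_def)
  note cA = cA1 cA2
  define C where "C = \<lceil>2 * real n / real L\<rceil>"
  have cnt: "int (card {v \<in> V. tau V E v = k}) < C" for k
  proof -
    have "\<not> C \<le> int (card {v \<in> V. tau V E v = k})" using neg unfolding C_def L_def by blast
    then show ?thesis by simp
  qed
  have pos: "0 < 2 * real n / real L" using L1 assms(4) by auto
  then have C1: "1 \<le> C" unfolding C_def by linarith
  define d where "d = nat (C - 1)"
  have dC: "int d = C - 1" using C1 d_def by simp
  have cntd: "card {v \<in> A. tau V E v = k} \<le> d" for k
  proof -
    have "card {v \<in> A. tau V E v = k} \<le> card {v \<in> V. tau V E v = k}"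
      by (rule card_mono) (use fin A_def in auto)
    then show ?thesis using cnt[of k] dC by linarith
  qed
  have pg: "card A \<le> card K * d" using pigeon[OF finA finK AK] cntd by blast
  have "real_of_int C - 1 < 2 * real n / real L" unfolding C_def using ceiling_correct by blast
  then have "real d < 2 * real n / real L" using dC by (metis of_int_diff of_int_of_nat_eq of_int_1)
  then have "real d * real L < 2 * real n" using L1 by (simp add: field_simps)
  then have dL: "d * L < 2 * n" by (metis of_nat_less_iff of_nat_mult of_nat_numeral)
  show False
  proof (cases "odd L")
    case False
    have "2 * n \<le> 2 * card K * d" using pg cA(2) False by simp
    also have "\<dots> \<le> L * d" using cK(1) by (rule mult_right_mono) simp
    finally show False using dL by (simp add: mult.commute)
  next
    case True
    have "2 * (n - 1) \<le> 2 * card K * d" using pg cA(1)[OF True] by simp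
    also have "\<dots> \<le> (L - 1) * d" using cK(2)[OF True] by (intro mult_right_mono) auto
    finally have h: "2 * (n - 1) \<le> L * d - d" by (simp add: diff_mult_distrib)
    have "d \<le> 1" using ar1[OF h dL assms(4)] .
    then have "d = 0 \<or> d = 1" by auto
    then show False using h dL Ln assms(4) by auto
  qed
qed

end
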